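(* Let $m,n\ge1$, $A\in\mathbb{R}^{m\times n}$, $\mathbf{u},\mathbf{l}\in\mathbb{R}^n$, $C$ a finite set of ReLU constraints and $\mathcal{T}$ a proof tree. If $\mathrm{check\_tree}(A,\mathbf{u},\mathbf{l},C,\mathcal{T})$ returns true, then the DNN verification query $\langle A,\mathbf{u},\mathbf{l},C\rangle$ has no solution, i.e. there is no $\mathbf{s}\in\mathbb{R}^n$ with $A\mathbf{s}=\mathbf{0}$, $\mathbf{l}\le\mathbf{s}\le\mathbf{u}$ and $\mathbf{s}$ satisfying every constraint in $C$.
   Context: For vectors, $\mathbf{l}\le\mathbf{x}\le\mathbf{u}$ means $l_j\le x_j\le u_j$ for all $j=1,\dots,n$. A ReLU constraint is a triple $(b,f,a)$ of indices in $\{1,\dots,n\}$; $\mathbf{s}\in\mathbb{R}^n$ satisfies it if $s_f=\max(s_b,0)$ and $s_f-s_b-s_a=0$. A proof tree is either $\mathrm{Leaf}(w)$ with $w$ a finite list of reals, or $\mathrm{Node}(\sigma,\mathcal{T}^L,\mathcal{T}^R)$ with $\mathcal{T}^L,\mathcal{T}^R$ proof trees and $\sigma$ a split, which is either $\mathrm{SingleVar}(i,k)$ ($i$ an index, $k\in\mathbb{R}$) or $\mathrm{Relu}(b,f,a)$ ($b,f,a$ indices). A split is valid w.r.t. $C$ if it is $\mathrm{SingleVar}(i,k)$ with $1\le i\le n$, or $\mathrm{Relu}(b,f,a)$ with $(b,f,a)\in C$ and $b,f,a$ pairwise distinct. For $\mathbf{v}\in\mathbb{R}^n$, $\mathbf{v}[i\mapsto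 k]$ replaces the $i$-th entry by $k$. $\mathrm{update\_bounds}(\mathbf{l},\mathbf{u},\sigma)$ returns $((\mathbf{l}^L,\mathbf{u}^L),(\mathbf{l}^R,\mathbf{u}^R))$: for $\sigma=\mathrm{SingleVar}(i,k)$, $\mathbf{l}^L=\mathbf{l}$, $\mathbf{u}^L=\mathbf{u}[i\mapsto k]$, $\mathbf{l}^R=\mathbf{l}[i\mapsto k]$, $\mathbf{u}^R=\mathbf{u}$; for $\sigma=\mathrm{Relu}(b,f,a)$, $\mathbf{l}^L=\mathbf{l}[f\mapsto0]$, $\mathbf{u}^L=\mathbf{u}[b\mapsto0][f\mapsto0]$, $\mathbf{l}^R=\mathbf{l}[b\mapsto0][a\mapsto0]$, $\mathbf{u}^R=\mathbf{u}[a\mapsto0]$. The leaf check $\mathrm{leafcheck}(A,\mathbf{u},\mathbf{l},w)$ is true iff $w\in\mathbb{R}^m$ and, writing $\gamma=w^\intercal A\in\mathbb{R}^n$, $\sum_{j:\gamma_j>0}\gamma_ju_j+\sum_{j:\gamma_j<0}\gamma_jl_j<0$. Then $\mathrm{check\_tree}(A,\mathbf{u},\mathbf{l},C,\mathrm{Leaf}(w))=\mathrm{leafcheck}(A,\mathbf{u},\mathbf{l},w)$, and $\mathrm{check\_tree}(A,\mathbf{u},\mathbf{l},C,\mathrm{Node}(\sigma,\mathcal{T}^L,\mathcal{T}^R))$ is true iff $\sigma$ is valid w.r.t. $C$ and both $\mathrm{check\_tree}(A,\mathbf{u}^L,\mathbf{l}^L,C,\mathcal{T}^L)$ and $\mathrm{check\_tree}(A,\mathbf{u}^R,\mathbf{l}^R,C,\mathcal{T}^R)$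 are true, with $((\mathbf{l}^L,\mathbf{u}^L),(\mathbf{l}^R,\mathbf{u}^R))=\mathrm{update\_bounds}(\mathbf{l},\mathbf{u},\sigma)$. *)

theory Defs
  imports Complex_Main
begin

(* Conventions: indices are 0-based, ranging over {0..<n} (resp. {0..<m});
   vectors in R^n are functions nat => real (only entries < n matter);
   the matrix A in R^{m x n} is a function nat => nat => real, A i j = entry (i,j). *)

type_synonym relu = "nat \<times> nat \<times> nat"

datatype split = SingleVar nat real | Relu nat nat nat

datatype proof_tree = Leaf "real list" | Node split proof_tree proof_tree

definition relu_sat :: "(nat \<Rightarrow> real) \<Rightarrow> relu \<Rightarrow> bool" where
  "relu_sat s c = (case c of (b, f, a) \<Rightarrow> s f = max (s b) 0 \<and> s f - s b - s a = 0)"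

definition valid_split :: "nat \<Rightarrow> relu set \<Rightarrow> split \<Rightarrow> bool" where
  "valid_split n C \<sigma> = (case \<sigma> of
      SingleVar i k \<Rightarrow> i < n
    | Relu b f a \<Rightarrow> (b, f, a) \<in> C \<and> b \<noteq> f \<and> b \<noteq> a \<and> f \<noteq> a)"

fun update_bounds :: "(nat \<Rightarrow> real) \<Rightarrow> (nat \<Rightarrow> real) \<Rightarrow> split \<Rightarrow>
    ((nat \<Rightarrow> real) \<times> (nat \<Rightarrow> real)) \<times> ((nat \<Rightarrow> real) \<times> (nat \<Rightarrow> real))" where
  "update_bounds l u (SingleVar i k) = ((l, u(i := k)), (l(i := k), u))"
| "update_bounds l u (Relu b f a) =
     ((l(f := 0), (u(b := 0))(f := 0)), ((l(b := 0))(a := 0), u(a := 0)))"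

definition gamma :: "nat \<Rightarrow> (nat \<Rightarrow> nat \<Rightarrow> real) \<Rightarrow> real list \<Rightarrow> nat \<Rightarrow> real" where
  "gamma m A w j = (\<Sum>i<m. w ! i * A i j)"

definition leafcheck :: "nat \<Rightarrow> nat \<Rightarrow> (nat \<Rightarrow> nat \<Rightarrow> real) \<Rightarrow> (nat \<Rightarrow> real) \<Rightarrow> (nat \<Rightarrow> real)
    \<Rightarrow> real list \<Rightarrow> bool" where
  "leafcheck m n A u l w = (length w = m \<and>
     (\<Sum>j\<in>{j. j < n \<and> gamma m A w j > 0}. gamma m A w j * u j)
   + (\<Sum>j\<in>{j. j < n \<and> gamma m A w j < 0}. gamma m A w j * l j) < 0)"

fun check_tree :: "nat \<Rightarrow> nat \<Rightarrow> (nat \<Rightarrow> nat \<Rightarrow> real) \<Rightarrow> (nat \<Rightarrow> real) \<Rightarrow> (nat \<Rightarrow> real)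
    \<Rightarrow> relu set \<Rightarrow> proof_tree \<Rightarrow> bool" where
  "check_tree m n A u l C (Leaf w) = leafcheck m n A u l w"
| "check_tree m n A u l C (Node \<sigma> TL TR) =
     (valid_split n C \<sigma> \<and>
      (case update_bounds l u \<sigma> of ((lL, uL), (lR, uR)) \<Rightarrow>
         check_tree m n A uL lL C TL \<and> check_tree m n A uR lR C TR))"

definition is_solution :: "nat \<Rightarrow> nat \<Rightarrow> (nat \<Rightarrow> nat \<Rightarrow> real) \<Rightarrow> (nat \<Rightarrow> real) \<Rightarrow> (nat \<Rightarrow> real)
    \<Rightarrow> relu set \<Rightarrow> (nat \<Rightarrow> real) \<Rightarrow> bool" where
  "is_solution m n A u l C s =
     ((\<forall>i<m. (\<Sum>j<n. A i j * s j) = 0) \<and>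
      (\<forall>j<n. l j \<le> s j \<and> s j \<le> u j) \<and>
      (\<forall>c\<in>C. relu_sat s c))"

end

theory Submission
  imports Defs
begin

lemma leaf_false:
  assumes lc: "leafcheck m n A u l w"
    and Az: "\<forall>i<m. (\<Sum>j<n. A i j * s j) = 0"
    and bd: "\<forall>j<n. l j \<le> s j \<and> s j \<le> u j"
  shows False
proof -
  let ?g = "gamma m A w"
  have "(\<Sum>j<n. ?g j * s j) = (\<Sum>i<m. w ! i * (\<Sum>j<n. A i j * s j))"
    unfolding gamma_def by (simp add: sum_distrib_left sum_distrib_right sum.swap[of _ "{..<n}"] mult.assoc)
  also have "\<dots> = 0" using Az by simp
  finally have z: "(\<Sum>j<n. ?g j * s j) = 0" .
  let ?P = "{j. j < n \<and> ?g j > 0}" and ?N = "{j. j < n \<and> ?g j < 0}" and ?Z = "{j. j < n \<and> ?g j = 0}"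
  have split: "{..<n} = ?P \<union> (?N \<union> ?Z)" by auto
  have "(\<Sum>j<n. ?g j * s j) = (\<Sum>j\<in>?P. ?g j * s j) + ((\<Sum>j\<in>?N. ?g j * s j) + (\<Sum>j\<in>?Z. ?g j * s j))"
    unfolding split by (subst sum.union_disjoint, auto intro: sum.union_disjoint)+
  moreover have "(\<Sum>j\<in>?Z. ?g j * s j) = 0" by simp
  moreover have "(\<Sum>j\<in>?P. ?g j * s j) \<le> (\<Sum>j\<in>?P. ?g j * u j)"
    by (rule sum_mono) (use bd in \<open>auto intro: mult_left_mono\<close>)
  moreover have "(\<Sum>j\<in>?N. ?g j * s j) \<le> (\<Sum>j\<in>?N. ?g j * l j)"
    by (rule sum_mono) (use bd in \<open>auto intro: mult_left_mono_neg\<close>)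
  ultimately show False using z lc unfolding leafcheck_def by linarith
qed

lemma tree_false:
  assumes "check_tree m n A u l C T"
    and "\<forall>i<m. (\<Sum>j<n. A i j * s j) = 0"
    and "\<forall>j<n. l j \<le> s j \<and> s j \<le> u j"
    and "\<forall>c\<in>C. relu_sat s c"
  shows False
  using assms
proof (induction T arbitrary: l u)
  case (Leaf w)
  then show ?case using leaf_false by auto
next
  case (Node \<sigma> TL TR)
  show ?case
  proof (cases \<sigma>)
    case (SingleVar i k)
    show ?thesis
    proof (cases "s i \<le> k")
      case True
      have "\<forall>j<n. l j \<le> s j \<and> s j \<le> (u(i:=k)) j" using True Node.prems(3) by auto
      then show ?thesis using Node.IH(1)[of "u(i:=k)" l] Node.prems SingleVar by (simp del: fun_upd_apply)
    next
      case False
      have "\<forall>j<n. (l(i:=k)) j \<le> s j \<and> s j \<le> u j" using False Node.prems(3) by auto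
      then show ?thesis using Node.IH(2)[of u "l(i:=k)"] Node.prems SingleVar by (simp del: fun_upd_apply)
    qed
  next
    case (Relu b f a)
    have v: "(b,f,a) \<in> C" "b \<noteq> f" "b \<noteq> a" "f \<noteq> a"
      using Node.prems(1) Relu by (auto simp: valid_split_def)
    have r: "s f = max (s b) 0" "s f - s b - s a = 0"
      using Node.prems(4) v(1) by (auto simp: relu_sat_def)
    show ?thesis
    proof (cases "s b \<le> 0")
      case True
      have "\<forall>j<n. (l(f := 0)) j \<le> s j \<and> s j \<le> ((u(b := 0))(f := 0)) j" using True Node.prems(3) r by auto
      then show ?thesis using Node.IH(1)[of "(u(b := 0))(f := 0)" "l(f := 0)"] Node.prems Relu v r
        by (simp del: fun_upd_apply)
    next
      case False
      have "\<forall>j<n. ((l(b := 0))(a := 0)) j \<le> s j \<and> s j \<le> (u(a := 0)) j" using False Node.prems(3) r by auto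
      then show ?thesis using Node.IH(2)[of "u(a := 0)" "(l(b := 0))(a := 0)"] Node.prems Relu v r
        by (simp del: fun_upd_apply)
    qed
  qed
qed

theorem mainTheorem8:
  fixes m n :: nat and A :: "nat \<Rightarrow> nat \<Rightarrow> real" and u l :: "nat \<Rightarrow> real"
    and C :: "relu set" and T :: proof_tree
  assumes "m \<ge> 1" and "n \<ge> 1"
    and "finite C"
    and "\<forall>(b, f, a) \<in> C. b < n \<and> f < n \<and> a < n"
    and "check_tree m n A u l C T"
  shows "\<not> (\<exists>s :: nat \<Rightarrow> real. is_solution m n A u l C s)"
  using assms(5) tree_false unfolding is_solution_def by blast

end
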